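(* If $X$ is a planar Peano continuum which is not semilocally simply connected at $x\in X$, then for every $\epsilon>0$ there exists a closed disk neighborhood $D$ of $x$ in $\mathbb R^2$ of diameter less than $\epsilon$ whose boundary circle is not contained in $X$.
   Context: A planar Peano continuum is a compact, connected, locally path connected subspace of $\mathbb R^2$. *)

theory Defs
  imports "HOL-Analysis.Analysis"
begin

definition peano_continuum :: "'a::real_normed_vector set \<Rightarrow> bool" where
  "peano_continuum X \<longleftrightarrow> compact X \<and> connected X \<and> locally path_connected X"

definition semilocally_simply_connected_at ::
    "'a::real_normed_vector set \<Rightarrow> 'a \<Rightarrow> bool" where
  "semilocally_simply_connected_at X x \<longleftrightarrow>
     (\<exists>U. openin (top_of_set X) U \<and> x \<in> U \<and>
        (\<forall>p. path p \<and> path_image p \<subseteq> U \<and> pathstart p = x \<and> pathfinish p = x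
              \<longrightarrow> homotopic_loops X p (linepath x x)))"

end

theory Submission
  imports Defs
begin

theorem lemmaA3:
  fixes X :: "(real^2) set" and x :: "real^2" and \<epsilon> :: real
  assumes "peano_continuum X"
    and "x \<in> X"
    and "\<not> semilocally_simply_connected_at X x"
    and "\<epsilon> > 0"
  shows "\<exists>c r. r > 0 \<and> x \<in> ball c r \<and> diameter (cball c r) < \<epsilon> \<and>
               \<not> (sphere c r \<subseteq> X)"
proof (rule ccontr)
  assume H: "\<not> ?thesis"
  have sph: "sphere x r \<subseteq> X" if "0 < r" "r < \<epsilon>/2" for r
    using H that by (auto simp: diameter_cball)
  have B: "ball x (\<epsilon>/2) \<subseteq> X"
  proof
    fix y assume y: "y \<in> ball x (\<epsilon>/2)"
    show "y \<in> X"
    proof (cases "y = x")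
      case True then show ?thesis using assms(2) by simp
    next
      case False
      then have "0 < dist x y" by simp
      with y sph[of "dist x y"] show ?thesis by auto
    qed
  qed
  have "semilocally_simply_connected_at X x"
    unfolding semilocally_simply_connected_at_def
  proof (intro exI conjI allI impI)
    show "openin (top_of_set X) (ball x (\<epsilon>/2))"
    proof -
      have "openin (top_of_set X) (X \<inter> ball x (\<epsilon>/2))" using openin_open_Int[OF open_ball] by blast
      moreover have "X \<inter> ball x (\<epsilon>/2) = ball x (\<epsilon>/2)" using B by blast
      ultimately show ?thesis by simp
    qed
    show "x \<in> ball x (\<epsilon>/2)" using assms(4) by simp
    fix p assume p: "path p \<and> path_image p \<subseteq> ball x (\<epsilon>/2) \<and> pathstart p = x \<and> pathfinish p = x"
    show "homotopic_loops X p (linepath x x)"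
    proof (rule homotopic_loops_linear)
      show "path p" "path (linepath x x)" "pathfinish p = pathstart p"
           "pathfinish (linepath x x) = pathstart (linepath x x)" using p by auto
      fix t :: real assume t: "t \<in> {0..1}"
      have "p t \<in> path_image p" using t by (simp add: path_image_def)
      then have "p t \<in> ball x (\<epsilon>/2)" using p by blast
      moreover have "x \<in> ball x (\<epsilon>/2)" using assms(4) by simp
      ultimately have "closed_segment (p t) x \<subseteq> ball x (\<epsilon>/2)"
        by (simp add: closed_segment_subset convex_ball)
      then show "closed_segment (p t) (linepath x x t) \<subseteq> X" using B by (simp add: linepath_def)
    qed
  qed
  with assms(3) show False by simp
qed

end
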